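(* Let $tn=(T,\prec^+,\alpha)$ be a task network in a domain $D$ with $C_d\neq\infty$. Then $tn$ can be decomposed into at most $C_c^{\sum_{i=0}^{C_d-1} C_\#\cdot C_s^i}$ pairwise non-isomorphic primitive task networks $tn'=(T',\prec'^+,\alpha')$, and each of these satisfies $|T'|\le |T|+C_\#\cdot(C_s^{C_d}-1)$.
   Context: An HTN domain is $D=(F,A,\mathcal{C},\delta,M)$ with propositions $F$, actions $A$, compound task names $\mathcal{C}$ ($A\cap\mathcal{C}=\emptyset$), action semantics $\delta$, and decomposition methods $M$, a set of pairs $(c,tn_m)$ with $c\in\mathcal{C}$ and $tn_m$ a task network. A task network is $(T,\prec^+,\alpha)$ with $T$ a finite set of tasks, $\prec^+$ a strict partial order on $T$, $\alpha:T\to A\cup\mathcal{C}$; a task $t$ is compound if $\alpha(t)\in\mathcal{C}$, and the network is primitive if it has no compound tasks. Decomposing a compound task $t$ via a method $(\alpha(t),tn_m)\in M$ replaces $t$ by the tasks of $tn_m$ (ordered among themselves as in $tn_m$), each related to the other tasks exactly as $t$ was. Measures: $C_\#=|\{t\in T:\alpha(t)\in\mathcal{C}\}|$ is the number of compound tasks in $tn$; $C_s=\max\{|T_m| : (c,(T_m,\prec^+_m,\alpha_m))\in M\}$; $C_c=\max_{c\in\mathcal{C}}|\{tn_m : (c,tn_m)\in M\}|$, the maximum number of pairwise non-isomorphic networks a compound task can be decomposed into; $C_d$ is defined recursively: $C_d=0$ for primitive networks, and a network has $C_d=i$ if $i$ is the smallest integer such that every decomposition of all compound tasks of the network results in a network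 with $C_d\le i-1$; $C_d=\infty$ if no such $i$ exists. *)

theory Defs
  imports Main
begin

text \<open>Task networks: task identifiers are natural numbers (an unbounded supply
of fresh identifiers), labels are of an arbitrary type 'l (actions and
compound task names).\<close>

record 'l tnet =
  tasks :: "nat set"
  tord  :: "(nat \<times> nat) set"
  tlab  :: "nat \<Rightarrow> 'l"

definition wf_tnet :: "'l set \<Rightarrow> 'l tnet \<Rightarrow> bool" where
  "wf_tnet L tn \<longleftrightarrow> finite (tasks tn) \<and> tord tn \<subseteq> tasks tn \<times> tasks tn
     \<and> irrefl (tord tn) \<and> trans (tord tn) \<and> (\<forall>t\<in>tasks tn. tlab tn t \<in> L)"

text \<open>HTN domain (only the parts relevant here): actions A, compound task
names C, methods M. Propositions and action semantics play no role.\<close>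
definition wf_domain :: "'l set \<Rightarrow> 'l set \<Rightarrow> ('l \<times> 'l tnet) set \<Rightarrow> bool" where
  "wf_domain A C M \<longleftrightarrow> A \<inter> C = {} \<and> finite A \<and> finite C \<and> finite M
     \<and> (\<forall>(c, tnm)\<in>M. c \<in> C \<and> wf_tnet (A \<union> C) tnm)"

definition tn_iso :: "'l tnet \<Rightarrow> 'l tnet \<Rightarrow> bool" where
  "tn_iso tn1 tn2 \<longleftrightarrow> (\<exists>f. bij_betw f (tasks tn1) (tasks tn2)
     \<and> (\<forall>x\<in>tasks tn1. tlab tn2 (f x) = tlab tn1 x)
     \<and> (\<forall>x\<in>tasks tn1. \<forall>y\<in>tasks tn1. (x, y) \<in> tord tn1 \<longleftrightarrow> (f x, f y) \<in> tord tn2))"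

definition compound_tasks :: "'l set \<Rightarrow> 'l tnet \<Rightarrow> nat set" where
  "compound_tasks C tn = {t \<in> tasks tn. tlab tn t \<in> C}"

definition primitive :: "'l set \<Rightarrow> 'l tnet \<Rightarrow> bool" where
  "primitive C tn \<longleftrightarrow> compound_tasks C tn = {}"

definition decomp_with :: "'l tnet \<Rightarrow> nat \<Rightarrow> 'l tnet \<Rightarrow> (nat \<Rightarrow> nat) \<Rightarrow> 'l tnet" where
  "decomp_with tn t tnm \<phi> =
    \<lparr> tasks = (tasks tn - {t}) \<union> \<phi> ` tasks tnm,
      tord = {(x, y). (x, y) \<in> tord tn \<and> x \<noteq> t \<and> y \<noteq> t}
             \<union> {(\<phi> x, \<phi> y) | x y. (x, y) \<in> tord tnm}
             \<union> {(\<phi> x, u) | x u. x \<in> tasks tnm \<and> (t, u) \<in> tord tn}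
             \<union> {(u, \<phi> x) | u x. x \<in> tasks tnm \<and> (u, t) \<in> tord tn},
      tlab = (\<lambda>y. if y \<in> \<phi> ` tasks tnm then tlab tnm (inv_into (tasks tnm) \<phi> y)
                  else tlab tn y) \<rparr>"

definition decomp_step :: "'l set \<Rightarrow> ('l \<times> 'l tnet) set \<Rightarrow> 'l tnet \<Rightarrow> nat \<Rightarrow> 'l tnet \<Rightarrow> bool" where
  "decomp_step C M tn t tn' \<longleftrightarrow> t \<in> compound_tasks C tn \<and>
     (\<exists>tnm \<phi>. (tlab tn t, tnm) \<in> M \<and> inj_on \<phi> (tasks tnm)
        \<and> \<phi> ` tasks tnm \<inter> tasks tn = {} \<and> tn' = decomp_with tn t tnm \<phi>)"

definition decomposes_to :: "'l set \<Rightarrow> ('l \<times> 'l tnet) set \<Rightarrow> 'l tnet \<Rightarrow> 'l tnet \<Rightarrow> bool" where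
  "decomposes_to C M = (\<lambda>tn tn'. \<exists>t. decomp_step C M tn t tn')\<^sup>*\<^sup>*"

fun decomp_seq :: "'l set \<Rightarrow> ('l \<times> 'l tnet) set \<Rightarrow> 'l tnet \<Rightarrow> nat list \<Rightarrow> 'l tnet \<Rightarrow> bool" where
  "decomp_seq C M tn [] tn' \<longleftrightarrow> tn' = tn"
| "decomp_seq C M tn (t # ts) tn'' \<longleftrightarrow> (\<exists>tn'. decomp_step C M tn t tn' \<and> decomp_seq C M tn' ts tn'')"

definition decomp_all :: "'l set \<Rightarrow> ('l \<times> 'l tnet) set \<Rightarrow> 'l tnet \<Rightarrow> 'l tnet \<Rightarrow> bool" where
  "decomp_all C M tn tn' \<longleftrightarrow> (\<exists>ts. distinct ts \<and> set ts = compound_tasks C tn \<and> decomp_seq C M tn ts tn')"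

text \<open>depth_le C M tn i  means  C_d(tn) \<le> i.\<close>
fun depth_le :: "'l set \<Rightarrow> ('l \<times> 'l tnet) set \<Rightarrow> 'l tnet \<Rightarrow> nat \<Rightarrow> bool" where
  "depth_le C M tn 0 \<longleftrightarrow> primitive C tn"
| "depth_le C M tn (Suc i) \<longleftrightarrow> (\<forall>tn'. decomp_all C M tn tn' \<longrightarrow> depth_le C M tn' i)"

text \<open>C_d (only meaningful when finite, i.e. some depth bound exists).\<close>
definition C_d :: "'l set \<Rightarrow> ('l \<times> 'l tnet) set \<Rightarrow> 'l tnet \<Rightarrow> nat" where
  "C_d C M tn = (LEAST i. depth_le C M tn i)"

definition C_num :: "'l set \<Rightarrow> 'l tnet \<Rightarrow> nat" where
  "C_num C tn = card (compound_tasks C tn)"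

definition C_s :: "('l \<times> 'l tnet) set \<Rightarrow> nat" where
  "C_s M = Max (insert 0 ((\<lambda>(c, tnm). card (tasks tnm)) ` M))"

definition n_iso_classes :: "'l tnet set \<Rightarrow> nat" where
  "n_iso_classes X = card ((\<lambda>x. {y \<in> X. tn_iso x y}) ` X)"

definition C_c :: "'l set \<Rightarrow> ('l \<times> 'l tnet) set \<Rightarrow> nat" where
  "C_c C M = Max (insert 0 ((\<lambda>c. n_iso_classes {tnm. (c, tnm) \<in> M}) ` C))"

end

theory Submission
  imports Defs
begin


definition ok_tn :: "'l tnet \<Rightarrow> bool" where
  "ok_tn N \<longleftrightarrow> finite (tasks N) \<and> tord N \<subseteq> tasks N \<times> tasks N \<and> irrefl (tord N)"

definition iso_via :: "(nat \<Rightarrow> nat) \<Rightarrow> 'l tnet \<Rightarrow> 'l tnet \<Rightarrow> bool" where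
  "iso_via f tn1 tn2 \<longleftrightarrow> bij_betw f (tasks tn1) (tasks tn2)
     \<and> (\<forall>x\<in>tasks tn1. tlab tn2 (f x) = tlab tn1 x)
     \<and> (\<forall>x\<in>tasks tn1. \<forall>y\<in>tasks tn1. (x, y) \<in> tord tn1 \<longleftrightarrow> (f x, f y) \<in> tord tn2)"

lemma tn_iso_via: "tn_iso N N' \<longleftrightarrow> (\<exists>f. iso_via f N N')"
  unfolding tn_iso_def iso_via_def by blast

lemma iso_via_id: "iso_via id N N"
  unfolding iso_via_def by auto

lemma tn_iso_refl: "tn_iso N N"
  using iso_via_id tn_iso_via by blast

lemma iso_via_trans: "iso_via f N1 N2 \<Longrightarrow> iso_via g N2 N3 \<Longrightarrow> iso_via (g \<circ> f) N1 N3"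
proof -
  assume a: "iso_via f N1 N2" and b: "iso_via g N2 N3"
  have m: "\<And>x. x \<in> tasks N1 \<Longrightarrow> f x \<in> tasks N2" using a unfolding iso_via_def bij_betw_def by blast
  show ?thesis unfolding iso_via_def
  proof (intro conjI ballI)
    show "bij_betw (g \<circ> f) (tasks N1) (tasks N3)" using a b unfolding iso_via_def using bij_betw_trans by blast
  next
    fix x assume "x \<in> tasks N1" then show "tlab N3 ((g \<circ> f) x) = tlab N1 x" using a b m unfolding iso_via_def by simp
  next
    fix x y assume "x \<in> tasks N1" "y \<in> tasks N1"
    then show "(x, y) \<in> tord N1 \<longleftrightarrow> ((g \<circ> f) x, (g \<circ> f) y) \<in> tord N3" using a b m unfolding iso_via_def by simp
  qed
qed

lemma tn_iso_trans: "tn_iso N1 N2 \<Longrightarrow> tn_iso N2 N3 \<Longrightarrow> tn_iso N1 N3"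
  using iso_via_trans tn_iso_via by metis

lemma iso_via_sym: "iso_via f N1 N2 \<Longrightarrow> iso_via (inv_into (tasks N1) f) N2 N1"
proof -
  assume a: "iso_via f N1 N2"
  let ?g = "inv_into (tasks N1) f"
  have b: "bij_betw f (tasks N1) (tasks N2)" using a iso_via_def by blast
  have bg: "bij_betw ?g (tasks N2) (tasks N1)" using b bij_betw_inv_into by blast
  have r: "\<And>y. y \<in> tasks N2 \<Longrightarrow> f (?g y) = y" using b bij_betw_inv_into_right by fastforce
  have m: "\<And>y. y \<in> tasks N2 \<Longrightarrow> ?g y \<in> tasks N1" using bg bij_betwE by blast
  show ?thesis unfolding iso_via_def
  proof (intro conjI ballI)
    show "bij_betw ?g (tasks N2) (tasks N1)" by (fact bg)
  next
    fix x assume "x \<in> tasks N2"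
    then show "tlab N1 (?g x) = tlab N2 x" using a m r unfolding iso_via_def by metis
  next
    fix x y assume "x \<in> tasks N2" "y \<in> tasks N2"
    then show "(x, y) \<in> tord N2 \<longleftrightarrow> (?g x, ?g y) \<in> tord N1" using a m r unfolding iso_via_def by metis
  qed
qed

lemma tn_iso_sym: "tn_iso N1 N2 \<Longrightarrow> tn_iso N2 N1"
  using iso_via_sym tn_iso_via by metis

lemma iso_card: "tn_iso N1 N2 \<Longrightarrow> card (tasks N1) = card (tasks N2)"
  unfolding tn_iso_def using bij_betw_same_card by metis


lemma fresh_map:
  fixes X D :: "nat set"
  assumes "finite X"
  shows "\<exists>\<phi>. inj_on \<phi> D \<and> \<phi> ` D \<inter> X = {}"
proof -
  define k where "k = Suc (Max (insert 0 X))"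
  have "\<And>x. x \<in> X \<Longrightarrow> x < k" using assms unfolding k_def
    by (simp add: le_imp_less_Suc)
  then have "inj_on (\<lambda>x. x + k) D \<and> (\<lambda>x. x + k) ` D \<inter> X = {}" by (auto simp: inj_on_def)
  then show ?thesis by blast
qed

lemma iso_compound:
  assumes "iso_via f N N'"
  shows "f ` compound_tasks C N = compound_tasks C N'"
proof -
  have b: "bij_betw f (tasks N) (tasks N')" and l: "\<forall>x\<in>tasks N. tlab N' (f x) = tlab N x"
    using assms unfolding iso_via_def by auto
  show ?thesis
  proof
    show "f ` compound_tasks C N \<subseteq> compound_tasks C N'"
      using b l unfolding compound_tasks_def bij_betw_def by auto
    show "compound_tasks C N' \<subseteq> f ` compound_tasks C N"
    proof
      fix y assume "y \<in> compound_tasks C N'"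
      then have y: "y \<in> tasks N'" "tlab N' y \<in> C" unfolding compound_tasks_def by auto
      then obtain x where "x \<in> tasks N" "y = f x" using b unfolding bij_betw_def by blast
      then show "y \<in> f ` compound_tasks C N" using y l unfolding compound_tasks_def by auto
    qed
  qed
qed

lemma iso_primitive:
  assumes "tn_iso N N'"
  shows "primitive C N \<longleftrightarrow> primitive C N'"
  using assms iso_compound unfolding tn_iso_via primitive_def by (metis image_is_empty)



lemma ok_tordD: "ok_tn N \<Longrightarrow> (x, y) \<in> tord N \<Longrightarrow> x \<in> tasks N \<and> y \<in> tasks N"
  unfolding ok_tn_def by blast

lemma ok_irr: "ok_tn N \<Longrightarrow> (x, x) \<notin> tord N"
  unfolding ok_tn_def irrefl_def by blast

lemma wf_ok: "wf_tnet L N \<Longrightarrow> ok_tn N"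
  unfolding wf_tnet_def ok_tn_def by blast

lemma tasks_dw: "tasks (decomp_with N t m \<phi>) = (tasks N - {t}) \<union> \<phi> ` tasks m"
  unfolding decomp_with_def by simp

lemma tlab_dw_new: "inj_on \<phi> (tasks m) \<Longrightarrow> a \<in> tasks m \<Longrightarrow> tlab (decomp_with N t m \<phi>) (\<phi> a) = tlab m a"
  unfolding decomp_with_def by simp

lemma tlab_dw_old: "\<phi> ` tasks m \<inter> tasks N = {} \<Longrightarrow> u \<in> tasks N \<Longrightarrow> tlab (decomp_with N t m \<phi>) u = tlab N u"
  unfolding decomp_with_def by auto

lemma tord_dw: "tord (decomp_with N t m \<phi>) = {(x, y). (x, y) \<in> tord N \<and> x \<noteq> t \<and> y \<noteq> t}
             \<union> {(\<phi> x, \<phi> y) | x y. (x, y) \<in> tord m}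
             \<union> {(\<phi> x, u) | x u. x \<in> tasks m \<and> (t, u) \<in> tord N}
             \<union> {(u, \<phi> x) | u x. x \<in> tasks m \<and> (u, t) \<in> tord N}"
  unfolding decomp_with_def by simp

locale dctx =
  fixes N :: "'l tnet" and t :: nat and m :: "'l tnet" and \<phi> :: "nat \<Rightarrow> nat"
  assumes okN: "ok_tn N" and okm: "ok_tn m" and tN: "t \<in> tasks N"
    and inj: "inj_on \<phi> (tasks m)" and disj: "\<phi> ` tasks m \<inter> tasks N = {}"
begin

abbreviation "D \<equiv> decomp_with N t m \<phi>"

lemma notin: "a \<in> tasks m \<Longrightarrow> \<phi> a \<notin> tasks N"
  using disj by blast

lemma ord_nn: "a \<in> tasks m \<Longrightarrow> b \<in> tasks m \<Longrightarrow> (\<phi> a, \<phi> b) \<in> tord D \<longleftrightarrow> (a, b) \<in> tord m"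
proof
  assume a: "a \<in> tasks m" "b \<in> tasks m" "(\<phi> a, \<phi> b) \<in> tord D"
  show "(a, b) \<in> tord m"
    using a unfolding tord_dw
    using ok_tordD[OF okN] ok_tordD[OF okm] notin inj unfolding inj_on_def by blast
qed (auto simp: tord_dw)

lemma ord_no: "a \<in> tasks m \<Longrightarrow> u \<in> tasks N \<Longrightarrow> u \<noteq> t \<Longrightarrow> (\<phi> a, u) \<in> tord D \<longleftrightarrow> (t, u) \<in> tord N"
proof
  assume a: "a \<in> tasks m" "u \<in> tasks N" "(\<phi> a, u) \<in> tord D"
  show "(t, u) \<in> tord N"
    using a unfolding tord_dw
    using ok_tordD[OF okN] ok_tordD[OF okm] notin inj unfolding inj_on_def by blast
qed (auto simp: tord_dw)

lemma ord_on: "a \<in> tasks m \<Longrightarrow> u \<in> tasks N \<Longrightarrow> u \<noteq> t \<Longrightarrow> (u, \<phi> a) \<in> tord D \<longleftrightarrow> (u, t) \<in> tord N"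
proof
  assume a: "a \<in> tasks m" "u \<in> tasks N" "(u, \<phi> a) \<in> tord D"
  show "(u, t) \<in> tord N"
    using a unfolding tord_dw
    using ok_tordD[OF okN] ok_tordD[OF okm] notin inj unfolding inj_on_def by blast
qed (auto simp: tord_dw)

lemma ord_oo: "u \<in> tasks N \<Longrightarrow> v \<in> tasks N \<Longrightarrow> u \<noteq> t \<Longrightarrow> v \<noteq> t \<Longrightarrow> (u, v) \<in> tord D \<longleftrightarrow> (u, v) \<in> tord N"
proof
  assume a: "u \<in> tasks N" "v \<in> tasks N" "(u, v) \<in> tord D"
  show "(u, v) \<in> tord N"
    using a unfolding tord_dw
    using ok_tordD[OF okN] ok_tordD[OF okm] notin inj unfolding inj_on_def by blast
qed (auto simp: tord_dw)

lemma ok_D: "ok_tn D"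
  unfolding ok_tn_def
proof (intro conjI)
  show "finite (tasks D)" using okN okm unfolding ok_tn_def tasks_dw by simp
  show "tord D \<subseteq> tasks D \<times> tasks D"
    unfolding tord_dw tasks_dw using ok_tordD[OF okN] ok_tordD[OF okm] ok_irr[OF okN] by blast
  show "irrefl (tord D)"
    unfolding irrefl_def tord_dw using ok_tordD[OF okN] ok_tordD[OF okm] ok_irr[OF okN] ok_irr[OF okm] notin inj
    unfolding inj_on_def by blast
qed

end



lemma iso_viaD:
  assumes "iso_via f N N'"
  shows "bij_betw f (tasks N) (tasks N')" "\<And>x. x \<in> tasks N \<Longrightarrow> f x \<in> tasks N'"
    "\<And>x. x \<in> tasks N \<Longrightarrow> tlab N' (f x) = tlab N x"
    "\<And>x y. x \<in> tasks N \<Longrightarrow> y \<in> tasks N \<Longrightarrow> (x, y) \<in> tord N \<longleftrightarrow> (f x, f y) \<in> tord N'"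
    "\<And>x y. x \<in> tasks N \<Longrightarrow> y \<in> tasks N \<Longrightarrow> f x = f y \<longleftrightarrow> x = y"
  using assms unfolding iso_via_def bij_betw_def inj_on_def by auto

lemma iso_step:
  assumes d1: "dctx N t m \<phi>" and d2: "dctx N' (f t) m' \<phi>'"
    and isoN: "iso_via f N N'" and isom: "iso_via g m m'"
  defines "h \<equiv> \<lambda>y. if y \<in> \<phi> ` tasks m then \<phi>' (g (inv_into (tasks m) \<phi> y)) else f y"
  shows "iso_via h (decomp_with N t m \<phi>) (decomp_with N' (f t) m' \<phi>')"
    and "\<And>u. u \<in> tasks N \<Longrightarrow> h u = f u"
proof -
  interpret A: dctx N t m \<phi> by (fact d1)
  interpret B: dctx N' "f t" m' \<phi>' by (fact d2)
  have hn: "\<And>a. a \<in> tasks m \<Longrightarrow> h (\<phi> a) = \<phi>' (g a)"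
    unfolding h_def using A.inj by simp
  show ho: "\<And>u. u \<in> tasks N \<Longrightarrow> h u = f u"
    unfolding h_def using A.disj by auto
  have fN: "\<And>x. x \<in> tasks N \<Longrightarrow> f x \<in> tasks N'" using iso_viaD(2)[OF isoN] .
  have gm: "\<And>x. x \<in> tasks m \<Longrightarrow> g x \<in> tasks m'" using iso_viaD(2)[OF isom] .
  have bij: "bij_betw h (tasks (decomp_with N t m \<phi>)) (tasks (decomp_with N' (f t) m' \<phi>'))"
  proof -
    have b1: "bij_betw (\<lambda>y. \<phi>' (g (inv_into (tasks m) \<phi> y))) (\<phi> ` tasks m) (\<phi>' ` tasks m')"
    proof -
      have "bij_betw (inv_into (tasks m) \<phi>) (\<phi> ` tasks m) (tasks m)"
        using A.inj bij_betw_inv_into inj_on_imp_bij_betw by blast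
      moreover have "bij_betw g (tasks m) (tasks m')" using iso_viaD(1)[OF isom] .
      moreover have "bij_betw \<phi>' (tasks m') (\<phi>' ` tasks m')" using B.inj inj_on_imp_bij_betw by blast
      ultimately have "bij_betw (\<phi>' \<circ> (g \<circ> inv_into (tasks m) \<phi>)) (\<phi> ` tasks m) (\<phi>' ` tasks m')"
        using bij_betw_trans by blast
      then show ?thesis by (simp add: comp_def)
    qed
    have b2: "bij_betw f (tasks N - {t}) (tasks N' - {f t})"
      using bij_betw_DiffI[OF iso_viaD(1)[OF isoN], of "{t}" "{f t}"] A.tN B.tN by simp
    have "bij_betw (\<lambda>y. if y \<in> \<phi> ` tasks m then \<phi>' (g (inv_into (tasks m) \<phi> y)) else f y)
       (\<phi> ` tasks m \<union> (tasks N - {t})) (\<phi>' ` tasks m' \<union> (tasks N' - {f t}))"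
      by (rule bij_betw_disjoint_Un[OF b1 b2]) (use A.disj B.disj in blast)+
    then show ?thesis unfolding h_def tasks_dw by (simp add: Un_commute)
  qed
  show "iso_via h (decomp_with N t m \<phi>) (decomp_with N' (f t) m' \<phi>')"
    unfolding iso_via_def
  proof (intro conjI ballI)
    show "bij_betw h (tasks (decomp_with N t m \<phi>)) (tasks (decomp_with N' (f t) m' \<phi>'))" by (fact bij)
  next
    fix x assume "x \<in> tasks (decomp_with N t m \<phi>)"
    then consider a where "a \<in> tasks m" "x = \<phi> a" | "x \<in> tasks N" "x \<noteq> t" unfolding tasks_dw by blast
    then show "tlab (decomp_with N' (f t) m' \<phi>') (h x) = tlab (decomp_with N t m \<phi>) x"
    proof cases
      case 1
      then show ?thesis using hn gm tlab_dw_new[OF A.inj] tlab_dw_new[OF B.inj] iso_viaD(3)[OF isom] by simp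
    next
      case 2
      then show ?thesis using ho fN tlab_dw_old[OF A.disj] tlab_dw_old[OF B.disj] iso_viaD(3)[OF isoN] by simp
    qed
  next
    fix x y assume x: "x \<in> tasks (decomp_with N t m \<phi>)" and y: "y \<in> tasks (decomp_with N t m \<phi>)"
    have neq: "\<And>u. u \<in> tasks N \<Longrightarrow> u \<noteq> t \<Longrightarrow> f u \<noteq> f t"
      using iso_viaD(5)[OF isoN] A.tN by blast
    from x consider a where "a \<in> tasks m" "x = \<phi> a" | "x \<in> tasks N" "x \<noteq> t" unfolding tasks_dw by blast
    then show "((x, y) \<in> tord (decomp_with N t m \<phi>)) = ((h x, h y) \<in> tord (decomp_with N' (f t) m' \<phi>'))"
    proof cases
      case 1
      note x1 = this
      from y consider b where "b \<in> tasks m" "y = \<phi> b" | "y \<in> tasks N" "y \<noteq> t" unfolding tasks_dw by blast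
      then show ?thesis
      proof cases
        case 1
        then show ?thesis using x1 hn gm A.ord_nn B.ord_nn iso_viaD(4)[OF isom] by simp
      next
        case 2
        then show ?thesis using x1 hn ho gm fN neq A.ord_no B.ord_no iso_viaD(4)[OF isoN] A.tN by simp
      qed
    next
      case 2
      note x2 = this
      from y consider b where "b \<in> tasks m" "y = \<phi> b" | "y \<in> tasks N" "y \<noteq> t" unfolding tasks_dw by blast
      then show ?thesis
      proof cases
        case 1
        then show ?thesis using x2 hn ho gm fN neq A.ord_on B.ord_on iso_viaD(4)[OF isoN] A.tN by simp
      next
        case 2
        then show ?thesis using x2 ho fN neq A.ord_oo B.ord_oo iso_viaD(4)[OF isoN] by simp
      qed
    qed
  qed
qed



definition okM :: "('l \<times> 'l tnet) set \<Rightarrow> bool" where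
  "okM M \<longleftrightarrow> (\<forall>p\<in>M. ok_tn (snd p))"

lemma okM_D: "okM M \<Longrightarrow> (c, m) \<in> M \<Longrightarrow> ok_tn m"
  unfolding okM_def by force

lemma compound_tasksD: "t \<in> compound_tasks C N \<Longrightarrow> t \<in> tasks N \<and> tlab N t \<in> C"
  unfolding compound_tasks_def by blast

lemma step_elim:
  assumes "decomp_step C M N t P"
  obtains m \<phi> where "t \<in> compound_tasks C N" "(tlab N t, m) \<in> M" "inj_on \<phi> (tasks m)"
    "\<phi> ` tasks m \<inter> tasks N = {}" "P = decomp_with N t m \<phi>"
  using assms unfolding decomp_step_def by blast

lemma step_ok:
  assumes "decomp_step C M N t P" "ok_tn N" "okM M"
  shows "ok_tn P"
proof -
  obtain m \<phi> where s: "t \<in> compound_tasks C N" "(tlab N t, m) \<in> M" "inj_on \<phi> (tasks m)"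
    "\<phi> ` tasks m \<inter> tasks N = {}" "P = decomp_with N t m \<phi>"
    using step_elim[OF assms(1)] by blast
  have "ok_tn m" by (rule okM_D[OF assms(3) s(2)])
  moreover have "t \<in> tasks N" using compound_tasksD[OF s(1)] by (rule conjunct1)
  ultimately have d: "dctx N t m \<phi>"
    using s(3,4) assms(2) by (simp add: dctx_def)
  show ?thesis using dctx.ok_D[OF d] s(5) by simp
qed

lemma seq_ok:
  assumes "decomp_seq C M N ts P" "ok_tn N" "okM M"
  shows "ok_tn P"
  using assms
proof (induction ts arbitrary: N)
  case Nil then show ?case by simp
next
  case (Cons t ts)
  then obtain A where "decomp_step C M N t A" "decomp_seq C M A ts P" by auto
  then show ?case using Cons.IH Cons.prems step_ok by metis
qed

lemma step_transfer:
  assumes st: "decomp_step C M N t P" and okN: "ok_tn N" and okN': "ok_tn N'" and oM: "okM M"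
    and iso: "iso_via f N N'"
  shows "\<exists>P' h. decomp_step C M N' (f t) P' \<and> iso_via h P P' \<and> (\<forall>u\<in>tasks N. h u = f u)"
proof -
  obtain m \<phi> where s: "t \<in> compound_tasks C N" "(tlab N t, m) \<in> M" "inj_on \<phi> (tasks m)"
    "\<phi> ` tasks m \<inter> tasks N = {}" "P = decomp_with N t m \<phi>"
    using step_elim[OF st] by blast
  have okm: "ok_tn m" by (rule okM_D[OF oM s(2)])
  have tN: "t \<in> tasks N" using compound_tasksD[OF s(1)] by (rule conjunct1)
  have "finite (tasks N')" using okN' unfolding ok_tn_def by simp
  from fresh_map[OF this, of "tasks m"]
  obtain \<phi>' where \<phi>': "inj_on \<phi>' (tasks m)" "\<phi>' ` tasks m \<inter> tasks N' = {}"
    by (elim conjE exE)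
  have d1: "dctx N t m \<phi>" using s(3,4) okN okm tN by (simp add: dctx_def)
  have ftN: "f t \<in> tasks N'" using iso_viaD(2)[OF iso] tN .
  have d2: "dctx N' (f t) m \<phi>'" using \<phi>' okN' okm ftN by (simp add: dctx_def)
  obtain h where I: "iso_via h (decomp_with N t m \<phi>) (decomp_with N' (f t) m \<phi>')" "\<forall>u\<in>tasks N. h u = f u"
    using iso_step[OF d1 d2 iso iso_via_id] by (intro that) auto
  have lab: "tlab N' (f t) = tlab N t" using iso_viaD(3)[OF iso] tN .
  have ftc: "f t \<in> compound_tasks C N'" using compound_tasksD[OF s(1)] ftN lab unfolding compound_tasks_def by simp
  have mM: "(tlab N' (f t), m) \<in> M" using s(2) lab by simp
  have "decomp_step C M N' (f t) (decomp_with N' (f t) m \<phi>')"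
    unfolding decomp_step_def using ftc mM \<phi>' by (intro conjI exI[of _ m] exI[of _ \<phi>']) auto
  then show ?thesis using I unfolding s(5) by (intro exI conjI)
qed

lemma seq_transfer:
  assumes "decomp_seq C M N ts P" "ok_tn N" "ok_tn N'" "okM M" "iso_via f N N'"
  shows "\<exists>ts' P'. decomp_seq C M N' ts' P' \<and> tn_iso P P' \<and> length ts' = length ts
     \<and> (distinct ts \<and> set ts \<subseteq> tasks N \<longrightarrow> ts' = map f ts)"
  using assms
proof (induction ts arbitrary: N N' f)
  case Nil
  then show ?case using tn_iso_via by fastforce
next
  case (Cons t ts)
  then obtain A where A: "decomp_step C M N t A" "decomp_seq C M A ts P" by auto
  obtain A' h where A': "decomp_step C M N' (f t) A'" "iso_via h A A'" "\<forall>u\<in>tasks N. h u = f u"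
    using step_transfer[OF A(1) Cons.prems(2,3,4,5)] by blast
  have okA: "ok_tn A" using step_ok A Cons.prems by blast
  have okA': "ok_tn A'" using step_ok A' Cons.prems by blast
  obtain ts' P' where IH: "decomp_seq C M A' ts' P'" "tn_iso P P'" "length ts' = length ts"
     "distinct ts \<and> set ts \<subseteq> tasks A \<longrightarrow> ts' = map h ts"
    using Cons.IH[OF A(2) okA okA' Cons.prems(4) A'(2)] by blast
  have seq: "decomp_seq C M N' (f t # ts') P'" using A' IH by auto
  have imp: "distinct (t # ts) \<and> set (t # ts) \<subseteq> tasks N \<longrightarrow> f t # ts' = map f (t # ts)"
  proof
    assume a: "distinct (t # ts) \<and> set (t # ts) \<subseteq> tasks N"
    obtain m \<phi> where "P = P" "A = decomp_with N t m \<phi>" using step_elim[OF A(1)] by metis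
    then have "set ts \<subseteq> tasks A" using a by (auto simp: tasks_dw)
    then have "ts' = map h ts" using IH a by auto
    then show "f t # ts' = map f (t # ts)" using A'(3) a by auto
  qed
  show ?case using seq IH(2,3) imp by (intro exI[of _ "f t # ts'"] exI[of _ P']) simp
qed

lemma seq_primitive:
  assumes "decomp_seq C M N ts P" "primitive C N"
  shows "ts = [] \<and> P = N"
proof (cases ts)
  case Nil then show ?thesis using assms by simp
next
  case (Cons t ts')
  then obtain A where "decomp_step C M N t A" using assms(1) by auto
  then have "t \<in> compound_tasks C N" unfolding decomp_step_def by (rule conjunct1)
  then show ?thesis using assms(2) unfolding primitive_def by simp
qed

lemma compound_survives:
  assumes "decomp_step C M N s A" "t \<in> compound_tasks C N" "t \<noteq> s"
  shows "t \<in> compound_tasks C A"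
proof -
  obtain m \<phi> where s: "(tlab N s, m) \<in> M" "\<phi> ` tasks m \<inter> tasks N = {}" "A = decomp_with N s m \<phi>"
    using step_elim[OF assms(1)] by metis
  have tN: "t \<in> tasks N" "tlab N t \<in> C" using compound_tasksD[OF assms(2)] by auto
  have "t \<in> tasks A" using tN assms(3) unfolding s(3) tasks_dw by simp
  moreover have "tlab A t = tlab N t" unfolding s(3) using tlab_dw_old[OF s(2) tN(1)] .
  ultimately show ?thesis using tN unfolding compound_tasks_def by simp
qed

lemma reach_seq:
  assumes "decomposes_to C M N P"
  shows "\<exists>ts. decomp_seq C M N ts P"
  using assms unfolding decomposes_to_def
proof (induction rule: converse_rtranclp_induct)
  case base
  then show ?case by (metis decomp_seq.simps(1))
next
  case (step y z)
  then show ?case by (metis decomp_seq.simps(2))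
qed



lemma tnet_eqI:
  fixes X Y :: "'l tnet"
  shows "tasks X = tasks Y \<Longrightarrow> tord X = tord Y \<Longrightarrow> tlab X = tlab Y \<Longrightarrow> X = Y"
  by (cases X, cases Y) simp

lemma swap_eq:
  assumes okN: "ok_tn N" and okms: "ok_tn ms" and okmt: "ok_tn mt"
    and sN: "s \<in> tasks N" and tN: "t \<in> tasks N" and st: "s \<noteq> t"
    and F1: "\<phi> ` tasks ms \<inter> tasks N = {}" and F2: "\<psi> ` tasks mt \<inter> tasks N = {}"
    and F3: "\<phi> ` tasks ms \<inter> \<psi> ` tasks mt = {}"
    and inj1: "inj_on \<phi> (tasks ms)" and inj2: "inj_on \<psi> (tasks mt)"
  shows "decomp_with (decomp_with N t mt \<psi>) s ms \<phi> = decomp_with (decomp_with N s ms \<phi>) t mt \<psi>"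
proof (rule tnet_eqI)
  show teq: "tasks (decomp_with (decomp_with N t mt \<psi>) s ms \<phi>) = tasks (decomp_with (decomp_with N s ms \<phi>) t mt \<psi>)"
    unfolding tasks_dw using F1 F2 sN tN st by blast
  show "tlab (decomp_with (decomp_with N t mt \<psi>) s ms \<phi>) = tlab (decomp_with (decomp_with N s ms \<phi>) t mt \<psi>)"
  proof
    fix y
    show "tlab (decomp_with (decomp_with N t mt \<psi>) s ms \<phi>) y = tlab (decomp_with (decomp_with N s ms \<phi>) t mt \<psi>) y"
      using F3 unfolding decomp_with_def by auto
  qed
  have dA: "dctx N s ms \<phi>" using okN okms sN F1 inj1 by (simp add: dctx_def)
  have okA: "ok_tn (decomp_with N s ms \<phi>)" using dctx.ok_D[OF dA] .
  have dB: "dctx N t mt \<psi>" using okN okmt tN F2 inj2 by (simp add: dctx_def)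
  have okB: "ok_tn (decomp_with N t mt \<psi>)" using dctx.ok_D[OF dB] .
  have G1: "\<And>a. a \<in> tasks ms \<Longrightarrow> \<phi> a \<notin> tasks N" using F1 by blast
  have G2: "\<And>a. a \<in> tasks mt \<Longrightarrow> \<psi> a \<notin> tasks N" using F2 by blast
  have G3: "\<And>a b. a \<in> tasks ms \<Longrightarrow> b \<in> tasks mt \<Longrightarrow> \<phi> a \<noteq> \<psi> b" using F3 by blast
  have H1: "\<And>a. a \<in> tasks ms \<Longrightarrow> \<phi> a \<noteq> t" "\<And>a. a \<in> tasks ms \<Longrightarrow> \<phi> a \<noteq> s"
    using G1 tN sN by metis+
  have H2: "\<And>a. a \<in> tasks mt \<Longrightarrow> \<psi> a \<noteq> t" "\<And>a. a \<in> tasks mt \<Longrightarrow> \<psi> a \<noteq> s"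
    using G2 tN sN by metis+
  have dA3: "dctx (decomp_with N s ms \<phi>) t mt \<psi>"
    using okA okmt tN st inj2 F2 F3 unfolding dctx_def tasks_dw by blast
  have dB2: "dctx (decomp_with N t mt \<psi>) s ms \<phi>"
    using okB okms sN st inj1 F1 F3 unfolding dctx_def tasks_dw by blast
  have cls: "\<And>x. x \<in> tasks (decomp_with (decomp_with N s ms \<phi>) t mt \<psi>) \<Longrightarrow>
     (\<exists>a\<in>tasks ms. x = \<phi> a) \<or> (\<exists>a\<in>tasks mt. x = \<psi> a) \<or> (x \<in> tasks N \<and> x \<noteq> s \<and> x \<noteq> t)"
    unfolding tasks_dw by blast
  note chars = dctx.ord_nn[OF dA] dctx.ord_no[OF dA] dctx.ord_on[OF dA] dctx.ord_oo[OF dA]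
     dctx.ord_nn[OF dB] dctx.ord_no[OF dB] dctx.ord_on[OF dB] dctx.ord_oo[OF dB]
     dctx.ord_nn[OF dA3] dctx.ord_no[OF dA3] dctx.ord_on[OF dA3] dctx.ord_oo[OF dA3]
     dctx.ord_nn[OF dB2] dctx.ord_no[OF dB2] dctx.ord_on[OF dB2] dctx.ord_oo[OF dB2]
  have ordeq: "\<And>x y. x \<in> tasks (decomp_with (decomp_with N s ms \<phi>) t mt \<psi>) \<Longrightarrow>
        y \<in> tasks (decomp_with (decomp_with N s ms \<phi>) t mt \<psi>) \<Longrightarrow>
    (x, y) \<in> tord (decomp_with (decomp_with N t mt \<psi>) s ms \<phi>) \<longleftrightarrow> (x, y) \<in> tord (decomp_with (decomp_with N s ms \<phi>) t mt \<psi>)"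
  proof -
    fix x y
    assume x: "x \<in> tasks (decomp_with (decomp_with N s ms \<phi>) t mt \<psi>)"
      and y: "y \<in> tasks (decomp_with (decomp_with N s ms \<phi>) t mt \<psi>)"
    from cls[OF x] cls[OF y] show "?thesis x y"
    proof (elim disjE bexE conjE)
      fix a b
      assume "a \<in> tasks ms" "x = \<phi> a" "b \<in> tasks ms" "y = \<phi> b"
      then show ?thesis by (simp add: chars tasks_dw H1 H2 G3 st[symmetric] st sN tN)
    next
      fix a b
      assume "a \<in> tasks ms" "x = \<phi> a" "b \<in> tasks mt" "y = \<psi> b"
      then show ?thesis by (simp add: chars tasks_dw H1 H2 G3 st[symmetric] st sN tN)
    next
      fix a
      assume "a \<in> tasks ms" "x = \<phi> a" "y \<in> tasks N" "y \<noteq> s" "y \<noteq> t"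
      then show ?thesis by (simp add: chars tasks_dw H1 H2 G3 st[symmetric] st sN tN)
    next
      fix a b
      assume "a \<in> tasks mt" "x = \<psi> a" "b \<in> tasks ms" "y = \<phi> b"
      then show ?thesis by (simp add: chars tasks_dw H1 H2 G3 st[symmetric] st sN tN)
    next
      fix a b
      assume "a \<in> tasks mt" "x = \<psi> a" "b \<in> tasks mt" "y = \<psi> b"
      then show ?thesis by (simp add: chars tasks_dw H1 H2 G3 st[symmetric] st sN tN)
    next
      fix a
      assume "a \<in> tasks mt" "x = \<psi> a" "y \<in> tasks N" "y \<noteq> s" "y \<noteq> t"
      then show ?thesis by (simp add: chars tasks_dw H1 H2 G3 st[symmetric] st sN tN)
    next
      fix b
      assume "x \<in> tasks N" "x \<noteq> s" "x \<noteq> t" "b \<in> tasks ms" "y = \<phi> b"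
      then show ?thesis by (simp add: chars tasks_dw H1 H2 G3 st[symmetric] st sN tN)
    next
      fix b
      assume "x \<in> tasks N" "x \<noteq> s" "x \<noteq> t" "b \<in> tasks mt" "y = \<psi> b"
      then show ?thesis by (simp add: chars tasks_dw H1 H2 G3 st[symmetric] st sN tN)
    next
      assume "x \<in> tasks N" "x \<noteq> s" "x \<noteq> t" "y \<in> tasks N" "y \<noteq> s" "y \<noteq> t"
      then show ?thesis by (simp add: chars tasks_dw H1 H2 G3 st[symmetric] st sN tN)
    qed
  qed
  show "tord (decomp_with (decomp_with N t mt \<psi>) s ms \<phi>) = tord (decomp_with (decomp_with N s ms \<phi>) t mt \<psi>)"
  proof -
    have "ok_tn (decomp_with (decomp_with N t mt \<psi>) s ms \<phi>)" using dctx.ok_D[OF dB2] .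
    moreover have "ok_tn (decomp_with (decomp_with N s ms \<phi>) t mt \<psi>)" using dctx.ok_D[OF dA3] .
    ultimately have sub1: "tord (decomp_with (decomp_with N t mt \<psi>) s ms \<phi>) \<subseteq> tasks (decomp_with (decomp_with N s ms \<phi>) t mt \<psi>) \<times> tasks (decomp_with (decomp_with N s ms \<phi>) t mt \<psi>)"
       and sub2: "tord (decomp_with (decomp_with N s ms \<phi>) t mt \<psi>) \<subseteq> tasks (decomp_with (decomp_with N s ms \<phi>) t mt \<psi>) \<times> tasks (decomp_with (decomp_with N s ms \<phi>) t mt \<psi>)"
      unfolding ok_tn_def teq by simp_all
    show ?thesis
    proof (rule antisym; rule subrelI)
      fix x y assume a: "(x, y) \<in> tord (decomp_with (decomp_with N t mt \<psi>) s ms \<phi>)"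
      then have "x \<in> tasks (decomp_with (decomp_with N s ms \<phi>) t mt \<psi>)" "y \<in> tasks (decomp_with (decomp_with N s ms \<phi>) t mt \<psi>)"
        using sub1 by auto
      then show "(x, y) \<in> tord (decomp_with (decomp_with N s ms \<phi>) t mt \<psi>)" using ordeq a by simp
    next
      fix x y assume a: "(x, y) \<in> tord (decomp_with (decomp_with N s ms \<phi>) t mt \<psi>)"
      then have "x \<in> tasks (decomp_with (decomp_with N s ms \<phi>) t mt \<psi>)" "y \<in> tasks (decomp_with (decomp_with N s ms \<phi>) t mt \<psi>)"
        using sub2 by auto
      then show "(x, y) \<in> tord (decomp_with (decomp_with N t mt \<psi>) s ms \<phi>)" using ordeq a by simp
    qed
  qed
qed


lemma swap:
  assumes okN: "ok_tn N" and oM: "okM M" and st1: "decomp_step C M N s A"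
    and st2: "decomp_step C M A t A2" and tc: "t \<in> compound_tasks C N" and ne: "t \<noteq> s"
  shows "\<exists>B B2. decomp_step C M N t B \<and> decomp_step C M B s B2 \<and> tn_iso A2 B2"
proof -
  obtain ms \<phi> where s1: "s \<in> compound_tasks C N" "(tlab N s, ms) \<in> M" "inj_on \<phi> (tasks ms)"
    "\<phi> ` tasks ms \<inter> tasks N = {}" "A = decomp_with N s ms \<phi>"
    using step_elim[OF st1] by metis
  obtain mt \<phi>t where s2: "t \<in> compound_tasks C A" "(tlab A t, mt) \<in> M" "inj_on \<phi>t (tasks mt)"
    "\<phi>t ` tasks mt \<inter> tasks A = {}" "A2 = decomp_with A t mt \<phi>t"
    using step_elim[OF st2] by metis
  have okms: "ok_tn ms" by (rule okM_D[OF oM s1(2)])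
  have okmt: "ok_tn mt" by (rule okM_D[OF oM s2(2)])
  have sN: "s \<in> tasks N" using compound_tasksD[OF s1(1)] by (rule conjunct1)
  have tN: "t \<in> tasks N" using compound_tasksD[OF tc] by (rule conjunct1)
  have tA: "t \<in> tasks A" using compound_tasksD[OF s2(1)] by (rule conjunct1)
  have labA: "tlab A t = tlab N t" unfolding s1(5) using tlab_dw_old[OF s1(4) tN] .
  have "finite (tasks N \<union> \<phi> ` tasks ms)" using okN okms unfolding ok_tn_def by simp
  from fresh_map[OF this, of "tasks mt"]
  obtain \<psi> where \<psi>: "inj_on \<psi> (tasks mt)" "\<psi> ` tasks mt \<inter> (tasks N \<union> \<phi> ` tasks ms) = {}"
    by (elim conjE exE)
  have okA: "ok_tn A" using step_ok[OF st1 okN oM] .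
  have dA2: "dctx A t mt \<phi>t" using okA okmt tA s2(3,4) by (simp add: dctx_def)
  have psiA: "\<psi> ` tasks mt \<inter> tasks A = {}" using \<psi>(2) unfolding s1(5) tasks_dw by blast
  have dA3: "dctx A (id t) mt \<psi>" using okA okmt tA \<psi>(1) psiA by (simp add: dctx_def)
  have iso: "iso_via (\<lambda>y. if y \<in> \<phi>t ` tasks mt then \<psi> (id (inv_into (tasks mt) \<phi>t y)) else id y)
       A2 (decomp_with A (id t) mt \<psi>)"
    unfolding s2(5) by (rule iso_step(1)[OF dA2 dA3 iso_via_id iso_via_id])
  then have iso2: "tn_iso A2 (decomp_with A t mt \<psi>)" unfolding tn_iso_via by auto
  define B where "B = decomp_with N t mt \<psi>"
  have psiN: "\<psi> ` tasks mt \<inter> tasks N = {}" using \<psi>(2) by blast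
  have stB: "decomp_step C M N t B"
    unfolding decomp_step_def B_def using tc s2(2) labA \<psi>(1) psiN
    by (intro conjI exI[of _ mt] exI[of _ \<psi>]) auto
  have sB: "s \<in> compound_tasks C B" using compound_survives[OF stB s1(1)] ne by simp
  have labB: "tlab B s = tlab N s" unfolding B_def using tlab_dw_old[OF psiN sN] .
  have phiB: "\<phi> ` tasks ms \<inter> tasks B = {}" unfolding B_def tasks_dw using s1(4) \<psi>(2) by blast
  have stB2: "decomp_step C M B s (decomp_with B s ms \<phi>)"
    unfolding decomp_step_def using sB s1(2) labB s1(3) phiB
    by (intro conjI exI[of _ ms] exI[of _ \<phi>]) auto
  have eq: "decomp_with B s ms \<phi> = decomp_with A t mt \<psi>"
    unfolding B_def s1(5)
    by (rule swap_eq[OF okN okms okmt sN tN ne[symmetric] s1(4) psiN _ s1(3) \<psi>(1)]) (use \<psi>(2) in blast)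
  show ?thesis using stB stB2 iso2 eq by metis
qed

lemma first_any:
  assumes "decomp_seq C M N ts P" "primitive C P" "t \<in> compound_tasks C N" "ok_tn N" "okM M"
  shows "\<exists>ts' P'. decomp_seq C M N (t # ts') P' \<and> tn_iso P P' \<and> Suc (length ts') = length ts"
  using assms
proof (induction ts arbitrary: N)
  case Nil
  then show ?case unfolding primitive_def by simp
next
  case (Cons s ts)
  then obtain A where A: "decomp_step C M N s A" "decomp_seq C M A ts P" by auto
  show ?case
  proof (cases "s = t")
    case True
    then show ?thesis using A tn_iso_refl by (intro exI[of _ ts] exI[of _ P]) auto
  next
    case False
    have tA: "t \<in> compound_tasks C A" using compound_survives[OF A(1) Cons.prems(3)] False by simp
    have okA: "ok_tn A" using step_ok[OF A(1) Cons.prems(4,5)] .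
    obtain ts3 P3 where IH: "decomp_seq C M A (t # ts3) P3" "tn_iso P P3" "Suc (length ts3) = length ts"
      using Cons.IH[OF A(2) Cons.prems(2) tA okA Cons.prems(5)] by blast
    then obtain A2 where A2: "decomp_step C M A t A2" "decomp_seq C M A2 ts3 P3" by auto
    obtain B B2 where B: "decomp_step C M N t B" "decomp_step C M B s B2" "tn_iso A2 B2"
      using swap[OF Cons.prems(4,5) A(1) A2(1) Cons.prems(3)] False by metis
    obtain h where h: "iso_via h A2 B2" using B(3) tn_iso_via by metis
    have okA2: "ok_tn A2" using step_ok[OF A2(1) okA Cons.prems(5)] .
    have okB: "ok_tn B" using step_ok[OF B(1) Cons.prems(4,5)] .
    have okB2: "ok_tn B2" using step_ok[OF B(2) okB Cons.prems(5)] .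
    obtain ts4 P4 where T: "decomp_seq C M B2 ts4 P4" "tn_iso P3 P4" "length ts4 = length ts3"
      using seq_transfer[OF A2(2) okA2 okB2 Cons.prems(5) h] by blast
    have "decomp_seq C M N (t # s # ts4) P4" using B T by auto
    moreover have "tn_iso P P4" using tn_iso_trans IH(2) T(2) by blast
    ultimately show ?thesis using T(3) IH(3) by (intro exI[of _ "s # ts4"] exI[of _ P4]) simp
  qed
qed

lemma first_round:
  assumes "decomp_seq C M N path P" "primitive C P" "distinct ts" "set ts \<subseteq> compound_tasks C N"
    "ok_tn N" "okM M"
  shows "\<exists>N1 path' P'. decomp_seq C M N ts N1 \<and> decomp_seq C M N1 path' P' \<and> tn_iso P P'"
  using assms
proof (induction ts arbitrary: N path P)
  case Nil
  then show ?case using tn_iso_refl by (intro exI[of _ N] exI[of _ path] exI[of _ P]) simp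
next
  case (Cons t ts)
  have tc: "t \<in> compound_tasks C N" using Cons.prems(4) by simp
  obtain ts' P2 where F: "decomp_seq C M N (t # ts') P2" "tn_iso P P2"
    using first_any[OF Cons.prems(1,2) tc Cons.prems(5,6)] by blast
  then obtain A where A: "decomp_step C M N t A" "decomp_seq C M A ts' P2" by auto
  have P2: "primitive C P2" using iso_primitive[OF F(2)] Cons.prems(2) by simp
  have sub: "set ts \<subseteq> compound_tasks C A"
  proof
    fix x assume "x \<in> set ts"
    then have "x \<in> compound_tasks C N" "x \<noteq> t" using Cons.prems(3,4) by auto
    then show "x \<in> compound_tasks C A" using compound_survives[OF A(1)] by simp
  qed
  have okA: "ok_tn A" using step_ok[OF A(1) Cons.prems(5,6)] .
  obtain N1 path' P' where R: "decomp_seq C M A ts N1" "decomp_seq C M N1 path' P'" "tn_iso P2 P'"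
    using Cons.IH[OF A(2) P2 _ sub okA Cons.prems(6)] Cons.prems(3) by auto
  have "decomp_seq C M N (t # ts) N1" using A(1) R(1) by auto
  then show ?case using R(2) tn_iso_trans[OF F(2) R(3)] by blast
qed



lemma Cs_bound: "finite M \<Longrightarrow> (c, m) \<in> M \<Longrightarrow> card (tasks m) \<le> C_s M"
  unfolding C_s_def by (rule Max_ge) force+

lemma step_size:
  assumes st: "decomp_step C M N t P" and okN: "ok_tn N" and oM: "okM M" and fM: "finite M"
  shows "int (card (tasks P)) \<le> int (card (tasks N)) + (int (C_s M) - 1)
    \<and> int (card (compound_tasks C P)) \<le> int (card (compound_tasks C N)) + (int (C_s M) - 1)"
proof -
  obtain m \<phi> where s: "t \<in> compound_tasks C N" "(tlab N t, m) \<in> M" "inj_on \<phi> (tasks m)"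
    "\<phi> ` tasks m \<inter> tasks N = {}" "P = decomp_with N t m \<phi>"
    using step_elim[OF st] by metis
  have okm: "ok_tn m" by (rule okM_D[OF oM s(2)])
  have tN: "t \<in> tasks N" using compound_tasksD[OF s(1)] by (rule conjunct1)
  have fN: "finite (tasks N)" and fm: "finite (tasks m)" using okN okm unfolding ok_tn_def by auto
  have cm: "card (tasks m) \<le> C_s M" using Cs_bound[OF fM s(2)] .
  have ci: "card (\<phi> ` tasks m) = card (tasks m)" using card_image[OF s(3)] .
  have c1: "card (tasks P) = card (tasks N - {t}) + card (\<phi> ` tasks m)"
    unfolding s(5) tasks_dw using s(4) fN fm by (subst card_Un_disjoint) auto
  have c2: "card (tasks N - {t}) + 1 = card (tasks N)" using tN fN
    by (metis card_Diff1_less_iff card_Suc_Diff1 Suc_eq_plus1)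
  have fc: "finite (compound_tasks C N)" using fN unfolding compound_tasks_def by simp
  have sub: "compound_tasks C P \<subseteq> (compound_tasks C N - {t}) \<union> \<phi> ` tasks m"
  proof
    fix x assume x: "x \<in> compound_tasks C P"
    then have "x \<in> tasks P" "tlab P x \<in> C" unfolding compound_tasks_def by auto
    then show "x \<in> (compound_tasks C N - {t}) \<union> \<phi> ` tasks m"
      using tlab_dw_old[OF s(4), of x t] unfolding s(5) tasks_dw compound_tasks_def by auto
  qed
  have "card (compound_tasks C P) \<le> card ((compound_tasks C N - {t}) \<union> \<phi> ` tasks m)"
    using sub fc fm by (intro card_mono) auto
  also have "\<dots> \<le> card (compound_tasks C N - {t}) + card (\<phi> ` tasks m)" by (rule card_Un_le)
  finally have c3: "card (compound_tasks C P) \<le> card (compound_tasks C N - {t}) + card (tasks m)" using ci by simp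
  have c4: "card (compound_tasks C N - {t}) + 1 = card (compound_tasks C N)" using s(1) fc
    by (metis card_Suc_Diff1 Suc_eq_plus1)
  show ?thesis using c1 c2 c3 c4 ci cm by linarith
qed

lemma seq_size:
  assumes "decomp_seq C M N ts P" "ok_tn N" "okM M" "finite M"
  shows "int (card (tasks P)) \<le> int (card (tasks N)) + int (length ts) * (int (C_s M) - 1)
    \<and> int (card (compound_tasks C P)) \<le> int (card (compound_tasks C N)) + int (length ts) * (int (C_s M) - 1)"
  using assms
proof (induction ts arbitrary: N)
  case Nil then show ?case by simp
next
  case (Cons t ts)
  then obtain A where A: "decomp_step C M N t A" "decomp_seq C M A ts P" by auto
  have okA: "ok_tn A" using step_ok[OF A(1) Cons.prems(2,3)] .
  have 1: "int (card (tasks A)) \<le> int (card (tasks N)) + (int (C_s M) - 1)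
    \<and> int (card (compound_tasks C A)) \<le> int (card (compound_tasks C N)) + (int (C_s M) - 1)"
    using step_size[OF A(1) Cons.prems(2,3,4)] .
  have 2: "int (card (tasks P)) \<le> int (card (tasks A)) + int (length ts) * (int (C_s M) - 1)
    \<and> int (card (compound_tasks C P)) \<le> int (card (compound_tasks C A)) + int (length ts) * (int (C_s M) - 1)"
    using Cons.IH[OF A(2) okA Cons.prems(3,4)] .
  show ?case using 1 2 by (simp add: algebra_simps)
qed


lemma method_reps:
  assumes fM: "finite M"
  shows "\<exists>Mr. finite Mr \<and> card Mr \<le> n_iso_classes {m. (c, m) \<in> M} \<and> Mr \<subseteq> {m. (c, m) \<in> M}
     \<and> (\<forall>m. (c, m) \<in> M \<longrightarrow> (\<exists>r\<in>Mr. tn_iso m r))"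
proof -
  define Ms where "Ms = {m. (c, m) \<in> M}"
  have fMs: "finite Ms" unfolding Ms_def
    using finite_imageI[OF fM, of snd] by (rule finite_subset[rotated]) force
  define K where "K = (\<lambda>x. {y \<in> Ms. tn_iso x y}) ` Ms"
  define Mr where "Mr = (\<lambda>k. SOME x. x \<in> k) ` K"
  have fK: "finite K" unfolding K_def using fMs by simp
  have "card Mr \<le> card K" unfolding Mr_def by (rule card_image_le[OF fK])
  moreover have "card K = n_iso_classes Ms" unfolding K_def n_iso_classes_def by simp
  moreover have "Mr \<subseteq> Ms"
  proof
    fix r assume "r \<in> Mr"
    then obtain x where x: "x \<in> Ms" "r = (SOME y. y \<in> {y \<in> Ms. tn_iso x y})" unfolding Mr_def K_def by blast
    have "x \<in> {y \<in> Ms. tn_iso x y}" using x(1) tn_iso_refl by simp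
    then have "r \<in> {y \<in> Ms. tn_iso x y}" unfolding x(2) by (rule someI)
    then show "r \<in> Ms" by simp
  qed
  moreover have "\<forall>m. (c, m) \<in> M \<longrightarrow> (\<exists>r\<in>Mr. tn_iso m r)"
  proof (intro allI impI)
    fix m assume "(c, m) \<in> M"
    then have x: "m \<in> Ms" unfolding Ms_def by simp
    define r where "r = (SOME y. y \<in> {y \<in> Ms. tn_iso m y})"
    have "m \<in> {y \<in> Ms. tn_iso m y}" using x tn_iso_refl by simp
    then have "r \<in> {y \<in> Ms. tn_iso m y}" unfolding r_def by (rule someI)
    moreover have "r \<in> Mr" unfolding Mr_def K_def r_def using x by blast
    ultimately show "\<exists>r\<in>Mr. tn_iso m r" by blast
  qed
  ultimately show ?thesis using fK unfolding Ms_def Mr_def by (intro exI[of _ Mr]) (auto simp: Mr_def)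
qed

lemma nclasses_le_Cc:
  assumes "finite C" "c \<in> C"
  shows "n_iso_classes {m. (c, m) \<in> M} \<le> C_c C M"
  unfolding C_c_def using assms by (intro Max_ge) auto

lemma iso_step_ex:
  assumes "dctx N t m \<phi>" "dctx N' (f t) m' \<phi>'" "iso_via f N N'" "iso_via g m m'"
  shows "\<exists>h. iso_via h (decomp_with N t m \<phi>) (decomp_with N' (f t) m' \<phi>') \<and> (\<forall>u\<in>tasks N. h u = f u)"
proof -
  note a = iso_step[OF assms]
  show ?thesis by (rule exI, rule conjI, rule a(1), rule ballI, rule a(2))
qed

lemma seq_reps:
  fixes N :: "'l tnet" and M :: "('l \<times> 'l tnet) set"
  assumes okN: "ok_tn N" and oM: "okM M" and fM: "finite M" and fC: "finite C"
    and MC: "\<forall>p\<in>M. fst p \<in> C" and dts: "distinct ts" and sts: "set ts \<subseteq> tasks N"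
  shows "\<exists>R. finite R \<and> card R \<le> C_c C M ^ length ts \<and> (\<forall>r\<in>R. decomp_seq C M N ts r)
     \<and> (\<forall>P. decomp_seq C M N ts P \<longrightarrow> (\<exists>r\<in>R. tn_iso P r))"
  using okN dts sts
proof (induction ts arbitrary: N)
  case Nil
  then show ?case using tn_iso_refl by (intro exI[of _ "{N}"]) auto
next
  case (Cons t ts)
  show ?case
  proof (cases "t \<in> compound_tasks C N")
    case False
    have nd: "\<not> decomp_step C M N t A" for A
      using False unfolding decomp_step_def by simp
    show ?thesis by (rule exI[of _ "{}"]) (simp add: nd)
  next
    case True
    define c where "c = tlab N t"
    have cC: "c \<in> C" using compound_tasksD[OF True] unfolding c_def by simp
    have tN: "t \<in> tasks N" using compound_tasksD[OF True] by simp
    obtain Mr where Mr: "finite Mr" "card Mr \<le> n_iso_classes {m. (c, m) \<in> M}" "Mr \<subseteq> {m. (c, m) \<in> M}"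
      "\<forall>m. (c, m) \<in> M \<longrightarrow> (\<exists>r\<in>Mr. tn_iso m r)"
      using method_reps[OF fM, of c] by (elim exE conjE)
    have cMr: "card Mr \<le> C_c C M" using Mr(2) nclasses_le_Cc[OF fC cC, of M] by linarith
    have fN: "finite (tasks N)" using Cons.prems unfolding ok_tn_def by simp
    define phi where "phi = (\<lambda>r::'l tnet. SOME \<phi>. inj_on \<phi> (tasks r) \<and> \<phi> ` tasks r \<inter> tasks N = {})"
    have phi: "inj_on (phi r) (tasks r) \<and> phi r ` tasks r \<inter> tasks N = {}" for r
      unfolding phi_def using fresh_map[OF fN, of "tasks r"] by (rule someI_ex)
    define Nr where "Nr = (\<lambda>r. decomp_with N t r (phi r))"
    have okr: "ok_tn r" if "r \<in> Mr" for r using that Mr(3) okM_D[OF oM] by blast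
    have dr: "dctx N t r (phi r)" if "r \<in> Mr" for r
      using okr[OF that] Cons.prems(1) tN phi[of r] by (simp add: dctx_def)
    have stepr: "decomp_step C M N t (Nr r)" if "r \<in> Mr" for r
      unfolding decomp_step_def Nr_def using True that Mr(3) phi[of r] unfolding c_def
      by (intro conjI exI[of _ r] exI[of _ "phi r"]) auto
    have okNr: "ok_tn (Nr r)" if "r \<in> Mr" for r using step_ok[OF stepr[OF that] Cons.prems(1) oM] .
    have stsr: "set ts \<subseteq> tasks (Nr r)" for r
      using Cons.prems(2,3) unfolding Nr_def tasks_dw by auto
    have "\<forall>r\<in>Mr. \<exists>R. finite R \<and> card R \<le> C_c C M ^ length ts \<and> (\<forall>x\<in>R. decomp_seq C M (Nr r) ts x)
     \<and> (\<forall>P. decomp_seq C M (Nr r) ts P \<longrightarrow> (\<exists>x\<in>R. tn_iso P x))"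
      using Cons.IH okNr stsr Cons.prems(2) by simp
    then obtain Rf where Rf: "\<And>r. r \<in> Mr \<Longrightarrow> finite (Rf r) \<and> card (Rf r) \<le> C_c C M ^ length ts
      \<and> (\<forall>x\<in>Rf r. decomp_seq C M (Nr r) ts x) \<and> (\<forall>P. decomp_seq C M (Nr r) ts P \<longrightarrow> (\<exists>x\<in>Rf r. tn_iso P x))"
      by metis
    define R where "R = (\<Union>r\<in>Mr. Rf r)"
    have fR: "finite R" unfolding R_def using Mr(1) Rf by blast
    have "card R \<le> (\<Sum>r\<in>Mr. card (Rf r))" unfolding R_def by (rule card_UN_le[OF Mr(1)])
    also have "\<dots> \<le> (\<Sum>r\<in>Mr. C_c C M ^ length ts)" using Rf by (intro sum_mono) blast
    also have "\<dots> = card Mr * C_c C M ^ length ts" by simp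
    also have "\<dots> \<le> C_c C M * C_c C M ^ length ts" using cMr by (rule mult_right_mono) simp
    finally have cR: "card R \<le> C_c C M ^ length (t # ts)" by simp
    have inR: "\<forall>x\<in>R. decomp_seq C M N (t # ts) x"
      unfolding R_def using Rf stepr by (simp only: decomp_seq.simps) blast
    have cov: "\<forall>P. decomp_seq C M N (t # ts) P \<longrightarrow> (\<exists>x\<in>R. tn_iso P x)"
    proof (intro allI impI)
      fix P assume "decomp_seq C M N (t # ts) P"
      then obtain A where A: "decomp_step C M N t A" "decomp_seq C M A ts P" by auto
      obtain m \<phi> where s: "(tlab N t, m) \<in> M" "inj_on \<phi> (tasks m)"
        "\<phi> ` tasks m \<inter> tasks N = {}" "A = decomp_with N t m \<phi>"
        using step_elim[OF A(1)] by metis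
      obtain r where r: "r \<in> Mr" "tn_iso m r" using Mr(4) s(1) unfolding c_def by (elim allE impE bexE)
      obtain g where g: "iso_via g m r" using r(2) tn_iso_via by metis
      have okm: "ok_tn m" by (rule okM_D[OF oM s(1)])
      have dm: "dctx N t m \<phi>" using okm Cons.prems(1) tN s(2,3) by (simp add: dctx_def)
      have dr': "dctx N (id t) r (phi r)" using dr[OF r(1)] by simp
      have "\<exists>h. iso_via h A (Nr r) \<and> (\<forall>u\<in>tasks N. h u = u)"
        using iso_step_ex[OF dm dr' iso_via_id g] unfolding s(4) Nr_def id_apply .
      then obtain h where h: "iso_via h A (Nr r)" "\<forall>u\<in>tasks N. h u = u" by (elim exE conjE)
      have okA: "ok_tn A" using step_ok[OF A(1) Cons.prems(1) oM] .
      have stsA: "set ts \<subseteq> tasks A" using Cons.prems(2,3) unfolding s(4) tasks_dw by auto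
      obtain ts' P' where T: "decomp_seq C M (Nr r) ts' P'" "tn_iso P P'"
        "distinct ts \<and> set ts \<subseteq> tasks A \<longrightarrow> ts' = map h ts"
        using seq_transfer[OF A(2) okA okNr[OF r(1)] oM h(1)] by (elim exE conjE)
      have "map h ts = ts" using h(2) Cons.prems(3) by (intro map_idI) auto
      then have "ts' = ts" using T(3) stsA Cons.prems(2) by simp
      then obtain x where "x \<in> Rf r" "tn_iso P' x" using Rf[OF r(1)] T(1) by blast
      then show "\<exists>x\<in>R. tn_iso P x" unfolding R_def using r(1) tn_iso_trans[OF T(2)] by blast
    qed
    show ?thesis using fR cR inR cov by blast
  qed
qed



lemma main:
  fixes N :: "'l tnet" and M :: "('l \<times> 'l tnet) set"
  assumes oM: "okM M" and fM: "finite M" and fC: "finite C" and MC: "\<forall>p\<in>M. fst p \<in> C"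
  shows "depth_le C M N d \<Longrightarrow> ok_tn N \<Longrightarrow> \<exists>F. finite F \<and> card F \<le> C_c C M ^ (\<Sum>i<d. C_num C N * C_s M ^ i)
     \<and> (\<forall>path P. decomp_seq C M N path P \<and> primitive C P \<longrightarrow> (\<exists>z\<in>F. tn_iso P z)
          \<and> int (card (tasks P)) \<le> int (card (tasks N)) + int (C_num C N) * (int (C_s M) ^ d - 1))"
proof (induction d arbitrary: N)
  case 0
  then have pN: "primitive C N" by simp
  have "\<forall>path P. decomp_seq C M N path P \<and> primitive C P \<longrightarrow> (\<exists>z\<in>{N}. tn_iso P z)
          \<and> int (card (tasks P)) \<le> int (card (tasks N)) + int (C_num C N) * (int (C_s M) ^ 0 - 1)"
    using seq_primitive[OF _ pN] tn_iso_refl by auto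
  then show ?case by (intro exI[of _ "{N}"]) simp
next
  case (Suc d)
  define K where "K = C_num C N"
  define cs where "cs = C_s M"
  define cc where "cc = C_c C M"
  have fN: "finite (tasks N)" using Suc.prems(2) unfolding ok_tn_def by simp
  have fcN: "finite (compound_tasks C N)" using fN unfolding compound_tasks_def by simp
  define ts0 where "ts0 = sorted_list_of_set (compound_tasks C N)"
  have d0: "distinct ts0" and s0: "set ts0 = compound_tasks C N" and l0: "length ts0 = K"
    unfolding ts0_def K_def C_num_def using fcN by auto
  have s0N: "set ts0 \<subseteq> tasks N" using s0 unfolding compound_tasks_def by auto
  have res_depth: "depth_le C M r d" if "decomp_seq C M N ts0 r" for r
  proof -
    have "decomp_all C M N r" unfolding decomp_all_def using that d0 s0 by blast
    then show ?thesis using Suc.prems(1) by simp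
  qed
  have res_ok: "ok_tn r" if "decomp_seq C M N ts0 r" for r using seq_ok[OF that Suc.prems(2) oM] .
  have res_size: "int (card (tasks r)) \<le> int (card (tasks N)) + int K * (int cs - 1)
      \<and> int (C_num C r) \<le> int K + int K * (int cs - 1)" if "decomp_seq C M N ts0 r" for r
    using seq_size[OF that Suc.prems(2) oM fM] l0 unfolding cs_def K_def C_num_def by simp
  have res_num: "C_num C r \<le> K * cs" if "decomp_seq C M N ts0 r" for r
  proof -
    have "int (C_num C r) \<le> int K + int K * (int cs - 1)" using res_size[OF that] by simp
    also have "\<dots> = int (K * cs)" by (simp add: algebra_simps)
    finally show ?thesis by (simp only: of_nat_le_iff)
  qed
  obtain R where R: "finite R" "card R \<le> cc ^ K" "\<forall>r\<in>R. decomp_seq C M N ts0 r"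
     "\<forall>P. decomp_seq C M N ts0 P \<longrightarrow> (\<exists>r\<in>R. tn_iso P r)"
    using seq_reps[OF Suc.prems(2) oM fM fC MC d0 s0N] l0 unfolding cc_def by (elim exE conjE) simp
  have "\<forall>r\<in>R. \<exists>F. finite F \<and> card F \<le> cc ^ (\<Sum>i<d. C_num C r * cs ^ i)
     \<and> (\<forall>path P. decomp_seq C M r path P \<and> primitive C P \<longrightarrow> (\<exists>z\<in>F. tn_iso P z)
          \<and> int (card (tasks P)) \<le> int (card (tasks r)) + int (C_num C r) * (int cs ^ d - 1))"
    using Suc.IH res_depth res_ok R(3) unfolding cc_def cs_def by blast
  then obtain Ff where Ff: "\<And>r. r \<in> R \<Longrightarrow> finite (Ff r) \<and> card (Ff r) \<le> cc ^ (\<Sum>i<d. C_num C r * cs ^ i)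
     \<and> (\<forall>path P. decomp_seq C M r path P \<and> primitive C P \<longrightarrow> (\<exists>z\<in>Ff r. tn_iso P z)
          \<and> int (card (tasks P)) \<le> int (card (tasks r)) + int (C_num C r) * (int cs ^ d - 1))"
    by metis
  define F where "F = (\<Union>r\<in>R. Ff r)"
  define E where "E = (\<Sum>i<d. K * cs ^ Suc i)"
  have fF: "finite F" unfolding F_def using R(1) Ff by blast
  have cFr: "card (Ff r) \<le> cc ^ E" if r: "r \<in> R" for r
  proof -
    have e: "(\<Sum>i<d. C_num C r * cs ^ i) \<le> E" unfolding E_def
    proof (rule sum_mono)
      fix i
      have "C_num C r * cs ^ i \<le> (K * cs) * cs ^ i" using res_num R(3) r by (intro mult_right_mono) auto
      then show "C_num C r * cs ^ i \<le> K * cs ^ Suc i" by (simp add: algebra_simps)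
    qed
    have "cc ^ (\<Sum>i<d. C_num C r * cs ^ i) \<le> cc ^ E"
    proof (cases "cc = 0")
      case False
      then show ?thesis using e by (intro power_increasing) auto
    next
      case True
      have "card R \<ge> 1" using r R(1) by (metis One_nat_def Suc_leI card_gt_0_iff empty_iff)
      then have "K = 0" using R(2) True by (cases K) auto
      then have "C_num C r = 0" using res_num R(3) r by fastforce
      then show ?thesis using \<open>K = 0\<close> unfolding E_def by simp
    qed
    then show ?thesis using Ff[OF r] by linarith
  qed
  have "card F \<le> (\<Sum>r\<in>R. card (Ff r))" unfolding F_def by (rule card_UN_le[OF R(1)])
  also have "\<dots> \<le> (\<Sum>r\<in>R. cc ^ E)" using cFr by (rule sum_mono)
  also have "\<dots> = card R * cc ^ E" by simp
  also have "\<dots> \<le> cc ^ K * cc ^ E" using R(2) by (rule mult_right_mono) simp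
  also have "\<dots> = cc ^ (\<Sum>i<Suc d. K * cs ^ i)"
    unfolding E_def sum.lessThan_Suc_shift by (simp add: power_add)
  finally have cF: "card F \<le> C_c C M ^ (\<Sum>i<Suc d. C_num C N * C_s M ^ i)" unfolding cc_def K_def cs_def .
  have cov: "(\<exists>z\<in>F. tn_iso P z)
          \<and> int (card (tasks P)) \<le> int (card (tasks N)) + int (C_num C N) * (int (C_s M) ^ Suc d - 1)"
    if P: "decomp_seq C M N path P" "primitive C P" for path P
  proof -
    obtain N1 path' P' where FR: "decomp_seq C M N ts0 N1" "decomp_seq C M N1 path' P'" "tn_iso P P'"
      using first_round[OF P d0 _ Suc.prems(2) oM] s0 by blast
    obtain r where r: "r \<in> R" "tn_iso N1 r" using R(4) FR(1) by blast
    obtain f where f: "iso_via f N1 r" using r(2) tn_iso_via by metis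
    have rs: "decomp_seq C M N ts0 r" using R(3) r(1) by blast
    obtain ts'' P'' where T: "decomp_seq C M r ts'' P''" "tn_iso P' P''"
      using seq_transfer[OF FR(2) res_ok[OF FR(1)] res_ok[OF rs] oM f] by (elim exE conjE)
    have pP'': "primitive C P''" using P(2) iso_primitive[OF FR(3)] iso_primitive[OF T(2)] by simp
    have IH: "(\<exists>z\<in>Ff r. tn_iso P'' z)
          \<and> int (card (tasks P'')) \<le> int (card (tasks r)) + int (C_num C r) * (int cs ^ d - 1)"
      using Ff[OF r(1)] T(1) pP'' by blast
    then obtain z where z: "z \<in> Ff r" "tn_iso P'' z" by blast
    have isoP: "tn_iso P z" using tn_iso_trans[OF FR(3) tn_iso_trans[OF T(2) z(2)]] .
    have zF: "z \<in> F" unfolding F_def using r(1) z(1) by blast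
    have cardP: "card (tasks P) = card (tasks P'')" using iso_card[OF FR(3)] iso_card[OF T(2)] by simp
    have s1: "int (card (tasks r)) \<le> int (card (tasks N)) + int K * (int cs - 1)" using res_size[OF rs] by simp
    have s2: "C_num C r \<le> K * cs" using res_num[OF rs] .
    have s3: "int (card (tasks P'')) \<le> int (card (tasks r)) + int (C_num C r) * (int cs ^ d - 1)" using IH by simp
    have bound: "int (card (tasks P)) \<le> int (card (tasks N)) + int K * (int cs ^ Suc d - 1)"
    proof (cases "cs = 0")
      case True
      then have "C_num C r = 0" using s2 by simp
      then show ?thesis using s1 s3 cardP True by simp
    next
      case False
      then have x1: "int cs ^ d \<ge> 1" by simp
      have "int (C_num C r) * (int cs ^ d - 1) \<le> int (K * cs) * (int cs ^ d - 1)"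
      proof (rule mult_right_mono)
        show "int (C_num C r) \<le> int (K * cs)" using s2 by (simp only: of_nat_le_iff)
      qed (use x1 in linarith)
      moreover have "int K * (int cs - 1) + int (K * cs) * (int cs ^ d - 1) = int K * (int cs ^ Suc d - 1)"
        by (simp add: algebra_simps)
      ultimately show ?thesis using s1 s3 cardP by linarith
    qed
    show ?thesis using isoP zF bound unfolding K_def cs_def by blast
  qed
  show ?case using fF cF cov by blast
qed


theorem lemma1:
  fixes A C :: "'l set" and M :: "('l \<times> 'l tnet) set" and tn :: "'l tnet"
  assumes "wf_domain A C M"
    and "wf_tnet (A \<union> C) tn"
    and "\<exists>i. depth_le C M tn i"
  shows "(\<forall>S. S \<subseteq> {tn'. decomposes_to C M tn tn' \<and> primitive C tn'}
            \<longrightarrow> (\<forall>x\<in>S. \<forall>y\<in>S. x \<noteq> y \<longrightarrow> \<not> tn_iso x y)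
            \<longrightarrow> finite S \<and> card S \<le> C_c C M ^ (\<Sum>i<C_d C M tn. C_num C tn * C_s M ^ i))
       \<and> (\<forall>tn'. decomposes_to C M tn tn' \<and> primitive C tn' \<longrightarrow>
            int (card (tasks tn')) \<le> int (card (tasks tn))
              + int (C_num C tn) * (int (C_s M) ^ C_d C M tn - 1))"
proof -
  have fC: "finite C" and fM: "finite M" and Mw: "\<forall>(c, tnm)\<in>M. c \<in> C \<and> wf_tnet (A \<union> C) tnm"
    using assms(1) unfolding wf_domain_def by auto
  have oM: "okM M" unfolding okM_def using Mw wf_ok by fastforce
  have MC: "\<forall>p\<in>M. fst p \<in> C" using Mw by auto
  have okT: "ok_tn tn" using wf_ok[OF assms(2)] .
  define d where "d = C_d C M tn"
  have dl: "depth_le C M tn d" unfolding d_def C_d_def using assms(3) by (rule LeastI_ex)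
  obtain F where F: "finite F" "card F \<le> C_c C M ^ (\<Sum>i<d. C_num C tn * C_s M ^ i)"
    "\<forall>path P. decomp_seq C M tn path P \<and> primitive C P \<longrightarrow> (\<exists>z\<in>F. tn_iso P z)
          \<and> int (card (tasks P)) \<le> int (card (tasks tn)) + int (C_num C tn) * (int (C_s M) ^ d - 1)"
    using main[OF oM fM fC MC dl okT] by (elim exE conjE)
  have reach: "(\<exists>z\<in>F. tn_iso P z)
          \<and> int (card (tasks P)) \<le> int (card (tasks tn)) + int (C_num C tn) * (int (C_s M) ^ d - 1)"
    if hP: "decomposes_to C M tn P" "primitive C P" for P
  proof -
    obtain path where "decomp_seq C M tn path P" using reach_seq[OF hP(1)] by (elim exE)
    then show ?thesis using F(3) hP(2) by blast
  qed
  have part1: "finite S \<and> card S \<le> C_c C M ^ (\<Sum>i<d. C_num C tn * C_s M ^ i)"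
    if S: "S \<subseteq> {tn'. decomposes_to C M tn tn' \<and> primitive C tn'}"
      "\<forall>x\<in>S. \<forall>y\<in>S. x \<noteq> y \<longrightarrow> \<not> tn_iso x y" for S
  proof -
    define rep where "rep = (\<lambda>x. SOME z. z \<in> F \<and> tn_iso x z)"
    have rep: "rep x \<in> F \<and> tn_iso x (rep x)" if "x \<in> S" for x
    proof -
      have "\<exists>z. z \<in> F \<and> tn_iso x z" using reach[of x] S(1) that by blast
      then show ?thesis unfolding rep_def by (rule someI_ex)
    qed
    have inj: "inj_on rep S"
    proof (rule inj_onI)
      fix x y assume xy: "x \<in> S" "y \<in> S" "rep x = rep y"
      have "tn_iso x y" using rep[OF xy(1)] rep[OF xy(2)] xy(3) tn_iso_trans tn_iso_sym by metis
      then show "x = y" using S(2) xy(1,2) by blast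
    qed
    have sub: "rep ` S \<subseteq> F" using rep by blast
    have fS: "finite S" using finite_imageD[OF finite_subset[OF sub F(1)] inj] .
    have "card S = card (rep ` S)" using card_image[OF inj] by simp
    also have "\<dots> \<le> card F" using card_mono[OF F(1) sub] .
    finally show ?thesis using fS F(2) by simp
  qed
  show ?thesis unfolding d_def[symmetric] using part1 reach by blast
qed

end
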